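(* Let $\alpha\in\mathbb{R}$ be transcendental over $\mathbb{Q}$. Identify each element of $\mathbb{Q}(\alpha)$ with the unique rational function $r\in\mathbb{Q}(x)$ such that the element equals $r(\alpha)$, let $\mathbb{Q}(\alpha)^+$ be the set of those $r$ with $r(\alpha)>0$, and define $H_+=\{r\in \mathbb{Q}(\alpha)^+ : r'(\alpha)>0\}$, $H_0=\{r\in \mathbb{Q}(\alpha)^+ : r'(\alpha)=0\}$, $H_-=\{r\in \mathbb{Q}(\alpha)^+ : r'(\alpha)<0\}$. Then the only ways to write $\mathbb{Q}(\alpha)^+=A\sqcup B$ (unordered) with $A,B$ disjoint nonempty subsets each closed under addition and multiplication are $\mathbb{Q}(\alpha)^+=(H_+\cup H_0)\sqcup H_-$ and $\mathbb{Q}(\alpha)^+=H_+\sqcup(H_0\cup H_-)$. *)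

theory Defs
  imports "HOL-Analysis.Analysis" "HOL-Computational_Algebra.Polynomial_Factorial"
          "HOL-Computational_Algebra.Normalized_Fraction" "HOL-Computational_Algebra.Field_as_Ring"
begin

type_synonym ratfun = "rat poly fract"

definition ratfun_fun :: "ratfun \<Rightarrow> real \<Rightarrow> real" where
  "ratfun_fun r = (\<lambda>x. poly (map_poly of_rat (fst (quot_of_fract r))) x /
                        poly (map_poly of_rat (snd (quot_of_fract r))) x)"

definition ratfun_eval :: "ratfun \<Rightarrow> real \<Rightarrow> real" where
  "ratfun_eval r a = ratfun_fun r a"

definition ratfun_deriv :: "ratfun \<Rightarrow> real \<Rightarrow> real" where
  "ratfun_deriv r a = deriv (ratfun_fun r) a"

definition Qpos :: "real \<Rightarrow> ratfun set" where
  "Qpos a = {r. ratfun_eval r a > 0}"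

definition Hplus :: "real \<Rightarrow> ratfun set" where
  "Hplus a = {r \<in> Qpos a. ratfun_deriv r a > 0}"

definition Hzero :: "real \<Rightarrow> ratfun set" where
  "Hzero a = {r \<in> Qpos a. ratfun_deriv r a = 0}"

definition Hminus :: "real \<Rightarrow> ratfun set" where
  "Hminus a = {r \<in> Qpos a. ratfun_deriv r a < 0}"

definition add_mult_closed :: "ratfun set \<Rightarrow> bool" where
  "add_mult_closed S \<longleftrightarrow> (\<forall>x\<in>S. \<forall>y\<in>S. x + y \<in> S \<and> x * y \<in> S)"

end

theory Submission
  imports Defs
begin

definition rp :: "rat poly \<Rightarrow> real poly" where "rp p = map_poly of_rat p"

lemma coeff_rp: "coeff (rp p) n = of_rat (coeff p n)"
  by (simp add: rp_def coeff_map_poly)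

lemma rp_add: "rp (p + q) = rp p + rp q"
  by (rule poly_eqI) (simp add: coeff_rp of_rat_add)

lemma rp_minus: "rp (- p) = - rp p"
  by (rule poly_eqI) (simp add: coeff_rp of_rat_minus)

lemma rp_diff: "rp (p - q) = rp p - rp q"
  by (rule poly_eqI) (simp add: coeff_rp of_rat_diff)

lemma rp_mult: "rp (p * q) = rp p * rp q"
  by (rule poly_eqI) (simp add: coeff_rp coeff_mult of_rat_sum of_rat_mult)

lemma rp_pderiv: "rp (pderiv p) = pderiv (rp p)"
  by (rule poly_eqI) (simp add: coeff_rp coeff_pderiv of_rat_mult of_rat_add)

lemma rp_const: "rp [:c:] = [:of_rat c:]"
  by (rule poly_eqI) (simp add: coeff_rp coeff_pCons split: nat.splits)

lemma rp_X: "rp [:0,1:] = [:0,1:]"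
  by (rule poly_eqI) (simp add: coeff_rp coeff_pCons split: nat.splits)

lemma rp_eq0: "rp p = 0 \<longleftrightarrow> p = 0"
  by (simp add: rp_def map_poly_eq_0_iff)

definition ev :: "real \<Rightarrow> rat poly \<Rightarrow> real" where "ev a p = poly (rp p) a"
definition dv :: "real \<Rightarrow> rat poly \<Rightarrow> real" where "dv a p = poly (rp (pderiv p)) a"

lemma ev_add: "ev a (p + q) = ev a p + ev a q" by (simp add: ev_def rp_add)
lemma ev_mult: "ev a (p * q) = ev a p * ev a q" by (simp add: ev_def rp_mult)
lemma ev_minus: "ev a (- p) = - ev a p" by (simp add: ev_def rp_minus)
lemma ev_diff: "ev a (p - q) = ev a p - ev a q" by (simp add: ev_def rp_diff)
lemma ev_const: "ev a [:c:] = of_rat c" by (simp add: ev_def rp_const)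
lemma ev_X: "ev a [:0,1:] = a" by (simp add: ev_def rp_X)
lemma dv_add: "dv a (p + q) = dv a p + dv a q" by (simp add: dv_def pderiv_add rp_add)
lemma dv_mult: "dv a (p * q) = dv a p * ev a q + ev a p * dv a q"
  by (simp add: dv_def ev_def pderiv_mult rp_mult rp_add algebra_simps)
lemma dv_minus: "dv a (- p) = - dv a p" by (simp add: dv_def pderiv_minus rp_minus)
lemma dv_const: "dv a [:c:] = 0" by (simp add: dv_def rp_def)
lemma dv_X: "dv a [:0,1:] = 1" by (simp add: dv_def pderiv_pCons rp_const)

lemma ev_nonzero:
  assumes "\<not> algebraic a" "p \<noteq> 0" shows "ev a p \<noteq> 0"
proof
  assume "ev a p = 0"
  hence "\<exists>q. (\<forall>i. coeff q i \<in> \<rat>) \<and> q \<noteq> 0 \<and> poly q a = 0"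
    using assms(2) by (intro exI[of _ "rp p"]) (auto simp: coeff_rp rp_eq0 ev_def)
  with assms(1) show False by (simp add: algebraic_altdef)
qed

lemma ratfun_eval_Fract:
  assumes tr: "\<not> algebraic a" and b: "b \<noteq> 0"
  shows "ratfun_eval (Fract p b) a = ev a p / ev a b"
proof -
  obtain p' q' where pq: "quot_of_fract (Fract p b) = (p', q')" by (cases "quot_of_fract (Fract p b)")
  have q': "q' \<noteq> 0" using snd_quot_of_fract_nonzero[of "Fract p b"] pq by simp
  have "Fract p' q' = Fract p b" using Fract_quot_of_fract[of "Fract p b"] pq by simp
  hence "p' * b = p * q'" using q' b by (simp add: eq_fract)
  hence e1: "ev a p' * ev a b = ev a p * ev a q'" by (metis ev_mult)
  have nb: "ev a b \<noteq> 0" and nq: "ev a q' \<noteq> 0" using ev_nonzero[OF tr] b q' by auto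
  have "ratfun_eval (Fract p b) a = ev a p' / ev a q'"
    by (simp add: ratfun_eval_def ratfun_fun_def pq ev_def rp_def)
  also have "\<dots> = ev a p / ev a b"
    using e1 nb nq by (simp add: divide_simps)
  finally show ?thesis .
qed

lemma ratfun_deriv_Fract:
  assumes tr: "\<not> algebraic a" and b: "b \<noteq> 0"
  shows "ratfun_deriv (Fract p b) a = (dv a p * ev a b - ev a p * dv a b) / (ev a b)^2"
proof -
  obtain p' q' where pq: "quot_of_fract (Fract p b) = (p', q')" by (cases "quot_of_fract (Fract p b)")
  have q': "q' \<noteq> 0" using snd_quot_of_fract_nonzero[of "Fract p b"] pq by simp
  have "Fract p' q' = Fract p b" using Fract_quot_of_fract[of "Fract p b"] pq by simp
  hence eq: "p' * b = p * q'" using q' b by (simp add: eq_fract)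
  hence e1: "ev a p' * ev a b = ev a p * ev a q'" by (metis ev_mult)
  from eq have "dv a (p' * b) = dv a (p * q')" by simp
  hence e2: "dv a p' * ev a b + ev a p' * dv a b = dv a p * ev a q' + ev a p * dv a q'"
    by (simp add: dv_mult)
  have nb: "ev a b \<noteq> 0" and nq: "ev a q' \<noteq> 0" using ev_nonzero[OF tr] b q' by auto
  have "DERIV (\<lambda>x. poly (rp p') x / poly (rp q') x) a :>
          (poly (pderiv (rp p')) a * poly (rp q') a - poly (rp p') a * poly (pderiv (rp q')) a)
            / (poly (rp q') a * poly (rp q') a)"
    using nq by (intro DERIV_divide poly_DERIV) (simp add: ev_def)
  hence "ratfun_deriv (Fract p b) a = (dv a p' * ev a q' - ev a p' * dv a q') / (ev a q' * ev a q')"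
    by (simp add: ratfun_deriv_def ratfun_fun_def pq DERIV_imp_deriv rp_def[symmetric]
          ev_def dv_def rp_pderiv)
  also have "\<dots> = (dv a p * ev a b - ev a p * dv a b) / (ev a b)^2"
  proof -
    have p'v: "ev a p' = ev a p * ev a q' / ev a b" using e1 nb by (simp add: field_simps)
    have dp'v: "dv a p' = (dv a p * ev a q' + ev a p * dv a q' - ev a p' * dv a b) / ev a b"
      using e2 nb by (simp add: field_simps)
    show ?thesis unfolding dp'v p'v using nb nq
      by (simp add: field_simps power2_eq_square)
  qed
  finally show ?thesis .
qed

lemma alg_mult:
  fixes A B C Dd dA dB dC dD :: real
  assumes "B \<noteq> 0" "Dd \<noteq> 0"
  shows "((dA*C + A*dC)*(B*Dd) - (A*C)*(dB*Dd + B*dD))/(B*Dd)^2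
       = (dA*B - A*dB)/B^2 * (C/Dd) + (A/B)*((dC*Dd - C*dD)/Dd^2)"
  using assms by (simp add: field_simps power2_eq_square)
lemma alg_add:
  fixes A B C Dd dA dB dC dD :: real
  assumes "B \<noteq> 0" "Dd \<noteq> 0"
  shows "(((dA*Dd + A*dD) + (dC*B + C*dB))*(B*Dd) - (A*Dd + C*B)*(dB*Dd + B*dD))/(B*Dd)^2
       = (dA*B - A*dB)/B^2 + ((dC*Dd - C*dD)/Dd^2)"
  using assms by (simp add: field_simps power2_eq_square)

definition cst :: "rat \<Rightarrow> ratfun" where "cst c = to_fract [:c:]"
definition X0 :: ratfun where "X0 = to_fract [:0,1:]"

lemma cst_add: "cst (a + b) = cst a + cst b"
proof -
  have "[:a + b:] = [:a:] + [:b:]" by simp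
  thus ?thesis by (simp only: cst_def to_fract_add)
qed
lemma cst_mult: "cst (a * b) = cst a * cst b"
proof -
  have "[:a * b:] = [:a:] * [:b:]" by (simp add: mult_to_poly)
  thus ?thesis by (simp only: cst_def to_fract_mult)
qed
lemma cst_minus: "cst (- a) = - cst a"
proof -
  have "[:- a:] = - [:a:]" by simp
  thus ?thesis by (simp only: cst_def to_fract_uminus)
qed
lemma cst_diff: "cst (a - b) = cst a - cst b"
proof -
  have "[:a - b:] = [:a:] - [:b:]" by (simp add: diff_to_poly)
  thus ?thesis by (simp only: cst_def to_fract_diff)
qed
lemma cst_0: "cst 0 = 0" by (simp add: cst_def)
lemma cst_1: "cst 1 = 1" by (simp add: cst_def one_pCons[symmetric])
lemma cst_inj: "cst a = cst b \<longleftrightarrow> a = b" by (simp add: cst_def)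

lemma dv_ev: "dv a p = ev a (pderiv p)" by (simp add: dv_def ev_def)

lemma fract_rep: "\<exists>f g. g \<noteq> 0 \<and> r = Fract f g"
  by (cases r) auto

locale tctx =
  fixes \<alpha> :: real
  assumes tr: "\<not> algebraic \<alpha>"
begin

abbreviation E :: "ratfun \<Rightarrow> real" where "E r \<equiv> ratfun_eval r \<alpha>"
abbreviation D :: "ratfun \<Rightarrow> real" where "D r \<equiv> ratfun_deriv r \<alpha>"

lemma ev_nz: "p \<noteq> 0 \<Longrightarrow> ev \<alpha> p \<noteq> 0" using ev_nonzero[OF tr] .

lemma E_Fract: "b \<noteq> 0 \<Longrightarrow> E (Fract p b) = ev \<alpha> p / ev \<alpha> b"
  using ratfun_eval_Fract[OF tr] .
lemma D_Fract: "b \<noteq> 0 \<Longrightarrow> D (Fract p b) = (dv \<alpha> p * ev \<alpha> b - ev \<alpha> p * dv \<alpha> b) / (ev \<alpha> b)^2"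
  using ratfun_deriv_Fract[OF tr] .

lemma ev_1: "ev a 1 = 1" using ev_const[of a 1] by (simp add: one_pCons)
lemma dv_1: "dv a 1 = 0" using dv_const[of a 1] by (simp add: one_pCons)

lemma E_tof: "E (to_fract p) = ev \<alpha> p"
  by (simp add: to_fract_def E_Fract ev_1)
lemma D_tof: "D (to_fract p) = dv \<alpha> p"
  by (simp add: to_fract_def D_Fract ev_1 dv_1)

lemma E_cst: "E (cst c) = of_rat c" by (simp add: cst_def E_tof ev_const)
lemma D_cst: "D (cst c) = 0" by (simp add: cst_def D_tof dv_const)
lemma E_X0: "E X0 = \<alpha>" by (simp add: X0_def E_tof ev_X)
lemma D_X0: "D X0 = 1" by (simp add: X0_def D_tof dv_X)

lemma E_add: "E (r + s) = E r + E s"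
proof -
  obtain a b where r: "b \<noteq> 0" "r = Fract a b" using fract_rep by blast
  obtain c d where s: "d \<noteq> 0" "s = Fract c d" using fract_rep by blast
  have nz: "ev \<alpha> b \<noteq> 0" "ev \<alpha> d \<noteq> 0" using r s ev_nz by auto
  have "E (r + s) = ev \<alpha> (a*d + c*b) / ev \<alpha> (b*d)" using r s by (simp add: E_Fract)
  also have "\<dots> = (ev \<alpha> a * ev \<alpha> d + ev \<alpha> c * ev \<alpha> b) / (ev \<alpha> b * ev \<alpha> d)"
    by (simp only: ev_mult ev_add)
  also have "\<dots> = ev \<alpha> a / ev \<alpha> b + ev \<alpha> c / ev \<alpha> d"
    using nz by (simp add: add_divide_distrib)
  finally show ?thesis using r s by (simp add: E_Fract)
qed

lemma E_mult: "E (r * s) = E r * E s"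
proof -
  obtain a b where r: "b \<noteq> 0" "r = Fract a b" using fract_rep by blast
  obtain c d where s: "d \<noteq> 0" "s = Fract c d" using fract_rep by blast
  have "E (r * s) = ev \<alpha> (a*c) / ev \<alpha> (b*d)" using r s by (simp add: E_Fract)
  also have "\<dots> = (ev \<alpha> a * ev \<alpha> c) / (ev \<alpha> b * ev \<alpha> d)"
    by (simp only: ev_mult)
  also have "\<dots> = ev \<alpha> a / ev \<alpha> b * (ev \<alpha> c / ev \<alpha> d)"
    by simp
  finally show ?thesis using r s by (simp add: E_Fract)
qed

lemma D_add: "D (r + s) = D r + D s"
proof -
  obtain a b where r: "b \<noteq> 0" "r = Fract a b" using fract_rep by blast
  obtain c d where s: "d \<noteq> 0" "s = Fract c d" using fract_rep by blast
  have nz: "ev \<alpha> b \<noteq> 0" "ev \<alpha> d \<noteq> 0" using r s ev_nz by auto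
  have "D (r + s) = (dv \<alpha> (a*d + c*b) * ev \<alpha> (b*d) - ev \<alpha> (a*d + c*b) * dv \<alpha> (b*d)) / (ev \<alpha> (b*d))^2"
    using r s by (simp add: D_Fract)
  also have "\<dots> = (((dv \<alpha> a * ev \<alpha> d + ev \<alpha> a * dv \<alpha> d) + (dv \<alpha> c * ev \<alpha> b + ev \<alpha> c * dv \<alpha> b)) * (ev \<alpha> b * ev \<alpha> d)
      - (ev \<alpha> a * ev \<alpha> d + ev \<alpha> c * ev \<alpha> b) * (dv \<alpha> b * ev \<alpha> d + ev \<alpha> b * dv \<alpha> d)) / (ev \<alpha> b * ev \<alpha> d)^2"
    by (simp only: dv_mult ev_mult dv_add ev_add)
  also have "\<dots> = D r + D s" unfolding r s D_Fract[OF r(1)] D_Fract[OF s(1)] by (rule alg_add[where A="ev \<alpha> a" and B="ev \<alpha> b" and C="ev \<alpha> c" and Dd="ev \<alpha> d" and dA="dv \<alpha> a" and dB="dv \<alpha> b" and dC="dv \<alpha> c" and dD="dv \<alpha> d", OF nz])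
  finally show ?thesis .
qed

lemma D_mult: "D (r * s) = D r * E s + E r * D s"
proof -
  obtain a b where r: "b \<noteq> 0" "r = Fract a b" using fract_rep by blast
  obtain c d where s: "d \<noteq> 0" "s = Fract c d" using fract_rep by blast
  have nz: "ev \<alpha> b \<noteq> 0" "ev \<alpha> d \<noteq> 0" using r s ev_nz by auto
  have "D (r * s) = (dv \<alpha> (a*c) * ev \<alpha> (b*d) - ev \<alpha> (a*c) * dv \<alpha> (b*d)) / (ev \<alpha> (b*d))^2"
    using r s by (simp add: D_Fract)
  also have "\<dots> = ((dv \<alpha> a * ev \<alpha> c + ev \<alpha> a * dv \<alpha> c) * (ev \<alpha> b * ev \<alpha> d)
      - (ev \<alpha> a * ev \<alpha> c) * (dv \<alpha> b * ev \<alpha> d + ev \<alpha> b * dv \<alpha> d)) / (ev \<alpha> b * ev \<alpha> d)^2"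
    by (simp only: dv_mult ev_mult)
  also have "\<dots> = (dv \<alpha> a * ev \<alpha> b - ev \<alpha> a * dv \<alpha> b) / (ev \<alpha> b)^2 * (ev \<alpha> c / ev \<alpha> d)
     + ev \<alpha> a / ev \<alpha> b * ((dv \<alpha> c * ev \<alpha> d - ev \<alpha> c * dv \<alpha> d) / (ev \<alpha> d)^2)"
    by (rule alg_mult[where A="ev \<alpha> a" and B="ev \<alpha> b" and C="ev \<alpha> c" and Dd="ev \<alpha> d" and dA="dv \<alpha> a" and dB="dv \<alpha> b" and dC="dv \<alpha> c" and dD="dv \<alpha> d", OF nz])
  finally show ?thesis using r s by (simp add: D_Fract E_Fract)
qed

lemma neg_cst: "- r = cst (-1) * r" by (simp add: cst_minus cst_1)
lemma E_uminus: "E (- r) = - E r"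
  unfolding neg_cst[of r] E_mult E_cst by simp
lemma D_uminus: "D (- r) = - D r"
  unfolding neg_cst[of r] D_mult E_cst D_cst by simp
lemma E_diff: "E (r - s) = E r - E s"
  using E_add[of r "-s"] by (simp add: E_uminus)
lemma D_diff: "D (r - s) = D r - D s"
  using D_add[of r "-s"] by (simp add: D_uminus)
lemma E_cmult: "E (cst c * r) = of_rat c * E r" by (simp add: E_mult E_cst)
lemma D_cmult: "D (cst c * r) = of_rat c * D r" by (simp add: D_mult E_cst D_cst)

lemma E_nonzero: "r \<noteq> 0 \<Longrightarrow> E r \<noteq> 0"
proof -
  assume "r \<noteq> 0"
  obtain a b where r: "b \<noteq> 0" "r = Fract a b" using fract_rep by blast
  with \<open>r \<noteq> 0\<close> have "a \<noteq> 0" by (auto simp: eq_fract Zero_fract_def)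
  thus ?thesis using r ev_nz by (simp add: E_Fract)
qed

lemma E_inverse: "E (inverse r) = inverse (E r)"
proof (cases "r = 0")
  case True
  have "E 0 = 0" using E_cst[of 0] by (simp add: cst_0)
  thus ?thesis using True by simp
next
  case False
  have "E 1 = 1" using E_cst[of 1] by (simp add: cst_1)
  hence "E (inverse r) * E r = 1" using E_mult[of "inverse r" r] False by simp
  thus ?thesis using E_nonzero[OF False] by (simp add: field_simps)
qed


lemma D_zero_const:
  assumes "D r = 0" shows "\<exists>c. r = cst c"
proof -
  define p where "p = fst (quot_of_fract r)"
  define q where "q = snd (quot_of_fract r)"
  have q0: "q \<noteq> 0" by (simp add: q_def)
  have r: "r = Fract p q" by (simp add: p_def q_def)
  have cop: "coprime p q" unfolding p_def q_def by (rule coprime_quot_of_fract)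
  have "ev \<alpha> q \<noteq> 0" using q0 ev_nz by auto
  with assms have "dv \<alpha> p * ev \<alpha> q - ev \<alpha> p * dv \<alpha> q = 0"
    by (simp add: r D_Fract q0)
  hence "ev \<alpha> (pderiv p * q - p * pderiv q) = 0"
    by (simp only: dv_ev ev_diff ev_mult)
  hence "pderiv p * q - p * pderiv q = 0" using ev_nz by blast
  hence eq: "pderiv p * q = p * pderiv q" by simp
  hence "q dvd p * pderiv q" by (metis dvd_triv_right)
  moreover have cqp: "coprime q p" using cop by (rule coprime_commute[THEN iffD1])
  ultimately have qd: "q dvd pderiv q" using coprime_dvd_mult_right_iff[OF cqp] by simp
  have "pderiv q = 0"
  proof (rule ccontr)
    assume F: "pderiv q \<noteq> 0"
    have "degree q \<le> degree (pderiv q)" using qd F by (rule dvd_imp_degree_le)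
    moreover have "degree q \<noteq> 0" using F by (simp add: pderiv_eq_0_iff)
    ultimately show False by (simp add: degree_pderiv)
  qed
  hence dq: "degree q = 0" by (simp add: pderiv_eq_0_iff)
  then obtain c where c: "q = [:c:]" by (metis degree_eq_zeroE)
  with q0 have c0: "c \<noteq> 0" by simp
  from eq \<open>pderiv q = 0\<close> q0 have "pderiv p = 0" by simp
  hence "degree p = 0" by (simp add: pderiv_eq_0_iff)
  then obtain d where d: "p = [:d:]" by (metis degree_eq_zeroE)
  have "r = cst (d / c)"
    unfolding r c d cst_def to_fract_def using c0 by (simp add: eq_fract mult_to_poly)
  thus ?thesis by blast
qed


end

lemma of_rat_pos: "(0::real) < of_rat c \<longleftrightarrow> 0 < c"
  using of_rat_less[of 0 c] by simp

lemma rat_between: "(x::real) < y \<Longrightarrow> \<exists>q::rat. x < of_rat q \<and> of_rat q < y"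
proof -
  assume "x < y"
  then obtain r where "r \<in> \<rat>" "x < r" "r < y" using Rats_dense_in_real by blast
  thus ?thesis by (metis Rats_cases)
qed

lemma rat_above: "\<exists>q::rat. (x::real) < of_rat q"
  using rat_between[of x "x+1"] by auto

lemma rat_below: "\<exists>q::rat. of_rat q < (x::real)"
  using rat_between[of "x-1" x] by auto

lemma pick_ab:
  fixes M P Q x y :: real
  assumes M: "M > 0" and s1: "s1 = 1 \<or> s1 = -1" and s2: "s2 = 1 \<or> s2 = -1"
  shows "\<exists>a b::rat. s1 * (of_rat a - x) > 0 \<and> s2 * (of_rat b - y) > 0 \<and>
            M - (of_rat b - y) * P - (of_rat a - x) * Q > 0"
proof -
  define e where "e = M / (2 * (\<bar>P\<bar> + \<bar>Q\<bar> + 1))"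
  have e0: "e > 0" using M by (simp add: e_def add_pos_nonneg)
  have pick: "\<exists>q::rat. s * (of_rat q - z) > 0 \<and> \<bar>of_rat q - z\<bar> < e" if "s = 1 \<or> s = -1" for s z
  proof (cases "s = 1")
    case True
    obtain q where "z < of_rat q" "of_rat q < z + e" using rat_between[of z "z+e"] e0 by auto
    thus ?thesis using True by (intro exI[of _ q]) auto
  next
    case False
    hence s: "s = -1" using that by simp
    obtain q where "z - e < of_rat q" "of_rat q < z" using rat_between[of "z - e" z] e0 by auto
    thus ?thesis using s by (intro exI[of _ q]) auto
  qed
  obtain a where a: "s1 * (of_rat a - x) > 0" "\<bar>of_rat a - x\<bar> < e" using pick[OF s1] by blast
  obtain b where b: "s2 * (of_rat b - y) > 0" "\<bar>of_rat b - y\<bar> < e" using pick[OF s2] by blast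
  have "\<bar>(of_rat b - y) * P\<bar> \<le> e * \<bar>P\<bar>" using b(2) by (simp add: abs_mult mult_right_mono)
  moreover have "\<bar>(of_rat a - x) * Q\<bar> \<le> e * \<bar>Q\<bar>" using a(2) by (simp add: abs_mult mult_right_mono)
  moreover have "e * (\<bar>P\<bar> + \<bar>Q\<bar>) < M"
  proof -
    have "e * (\<bar>P\<bar> + \<bar>Q\<bar>) \<le> e * (\<bar>P\<bar> + \<bar>Q\<bar> + 1)" using e0 by simp
    also have "\<dots> = M / 2" using e_def by (simp add: field_simps)
    finally show ?thesis using M by simp
  qed
  ultimately have "M - (of_rat b - y) * P - (of_rat a - x) * Q > 0"
    by (smt (verit, best) abs_le_D1 distrib_left)
  thus ?thesis using a b by blast
qed

lemma cst_of_nat: "cst (of_nat n) = of_nat n"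
  by (induct n) (simp_all add: cst_0 cst_add cst_1)

lemma nat_mult_closed:
  assumes "\<forall>x\<in>X. \<forall>y\<in>X. x + y \<in> X" "r \<in> X"
  shows "of_nat (Suc n) * r \<in> X"
proof (induct n)
  case 0 thus ?case using assms by simp
next
  case (Suc n)
  have "of_nat (Suc (Suc n)) * r = of_nat (Suc n) * r + r" by (simp add: algebra_simps)
  thus ?case using Suc assms by simp
qed

lemma scale_gen:
  assumes X: "\<forall>x\<in>X. \<forall>y\<in>X. x + y \<in> X" and Y: "\<forall>x\<in>Y. \<forall>y\<in>Y. x + y \<in> Y"
    and dis: "X \<inter> Y = {}" and r: "r \<in> X" and c: "c > 0" and cr: "cst c * r \<in> X \<union> Y"
  shows "cst c * r \<in> X"
proof (rule ccontr)
  assume "cst c * r \<notin> X"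
  hence Yc: "cst c * r \<in> Y" using cr by auto
  obtain m n where mn: "quotient_of c = (m, n)" by (cases "quotient_of c")
  have n0: "n > 0" using quotient_of_denom_pos[OF mn] .
  have cq: "c = of_int m / of_int n" using quotient_of_div[OF mn] .
  have m0: "m > 0" using c cq n0 by (simp add: zero_less_divide_iff)
  obtain m' where m': "m = int (Suc m')" using m0 by (metis gr0_implies_Suc of_nat_0_less_iff pos_int_cases)
  obtain n' where n': "n = int (Suc n')" using n0 by (metis gr0_implies_Suc of_nat_0_less_iff pos_int_cases)
  have "of_nat (Suc n') * (cst c * r) \<in> Y" using nat_mult_closed[OF Y Yc] .
  moreover have "of_nat (Suc m') * r \<in> X" using nat_mult_closed[OF X r] .
  moreover have "of_nat (Suc n') * (cst c * r) = of_nat (Suc m') * r"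
  proof -
    have "of_nat (Suc n') * c = of_nat (Suc m')" using cq m' n' by (simp add: field_simps)
    hence h: "cst (of_nat (Suc n')) * cst c = cst (of_nat (Suc m'))" by (metis cst_mult)
    have "of_nat (Suc n') * (cst c * r) = (cst (of_nat (Suc n')) * cst c) * r"
      by (simp only: cst_of_nat mult.assoc)
    also have "\<dots> = cst (of_nat (Suc m')) * r" by (simp only: h)
    also have "\<dots> = of_nat (Suc m') * r" by (simp only: cst_of_nat)
    finally show ?thesis .
  qed
  ultimately show False using dis by (metis IntI empty_iff)
qed

locale part = tctx +
  fixes A B :: "ratfun set"
  assumes AB_un: "A \<union> B = {r. E r > 0}"
    and AB_dis: "A \<inter> B = {}"
    and A_cl: "add_mult_closed A" and B_cl: "add_mult_closed B"
    and A_cst: "\<And>c. c > 0 \<Longrightarrow> cst c \<in> A"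
begin

lemma AorB: "E r > 0 \<Longrightarrow> r \<in> A \<or> r \<in> B" using AB_un by auto
lemma A_pos: "r \<in> A \<Longrightarrow> E r > 0" using AB_un by auto
lemma B_pos: "r \<in> B \<Longrightarrow> E r > 0" using AB_un by auto
lemma notAB: "r \<in> A \<Longrightarrow> r \<in> B \<Longrightarrow> False" using AB_dis by auto
lemma A_add: "r \<in> A \<Longrightarrow> s \<in> A \<Longrightarrow> r + s \<in> A" using A_cl by (auto simp: add_mult_closed_def)
lemma B_add: "r \<in> B \<Longrightarrow> s \<in> B \<Longrightarrow> r + s \<in> B" using B_cl by (auto simp: add_mult_closed_def)
lemma A_mult: "r \<in> A \<Longrightarrow> s \<in> A \<Longrightarrow> r * s \<in> A" using A_cl by (auto simp: add_mult_closed_def)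
lemma B_mult: "r \<in> B \<Longrightarrow> s \<in> B \<Longrightarrow> r * s \<in> B" using B_cl by (auto simp: add_mult_closed_def)

lemma scaleB: assumes "r \<in> B" "c > 0" shows "cst c * r \<in> B"
proof -
  have "E (cst c * r) > 0" using assms B_pos by (simp add: E_cmult)
  thus ?thesis using scale_gen[of B A r c] assms AB_un AB_dis B_cl A_cl
    by (auto simp: add_mult_closed_def)
qed

lemma scaleA: assumes "r \<in> A" "c > 0" shows "cst c * r \<in> A"
proof -
  have "E (cst c * r) > 0" using assms A_pos by (simp add: E_cmult)
  thus ?thesis using scale_gen[of A B r c] assms AB_un AB_dis B_cl A_cl
    by (auto simp: add_mult_closed_def)
qed

lemma B_shift_small:
  assumes r: "r \<in> B" and c: "c > 0" "of_rat c < E r"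
  shows "r + cst c \<in> B"
proof (rule ccontr)
  assume "r + cst c \<notin> B"
  moreover have "E (r + cst c) > 0"
  proof -
    have "(0::real) < of_rat c" using c by (simp add: of_rat_pos)
    moreover have "E (r + cst c) = E r + of_rat c" by (simp add: E_add E_cst)
    ultimately show ?thesis using B_pos[OF r] by linarith
  qed
  ultimately have rcA: "r + cst c \<in> A" using AorB by blast
  obtain e where e: "(of_rat c :: real) < of_rat e" "of_rat e < E r" using rat_between[OF c(2)] by blast
  have ce: "c < e" using e(1) of_rat_less[of c e, where 'a=real] by simp
  have e0: "e > 0" using ce c by simp
  have re: "r - cst e \<in> B"
  proof (rule ccontr)
    assume "r - cst e \<notin> B"
    moreover have "E (r - cst e) > 0" using e by (simp add: E_diff E_cst)
    ultimately have "r - cst e \<in> A" using AorB by blast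
    hence "(r - cst e) + cst e \<in> A" using A_add A_cst[OF e0] by blast
    thus False using r notAB by simp
  qed
  have cr: "cst c * r \<in> B" using scaleB[OF r c(1)] .
  have er: "cst e * r \<in> B" using scaleB[OF r e0] .
  have S1: "(r - cst e) * (r - cst e) + (cst c * r + cst c * r + cst e * r + cst e * r) \<in> B"
    using B_add[OF B_mult[OF re re] B_add[OF B_add[OF B_add[OF cr cr] er] er]] .
  have "cst e * cst e - cst c * cst c = cst (e * e - c * c)" by (simp add: cst_mult cst_diff)
  moreover have "e * e - c * c > 0"
  proof -
    have "c * c < e * e" using ce c by (intro mult_strict_mono) auto
    thus ?thesis by simp
  qed
  ultimately have "cst e * cst e - cst c * cst c \<in> A" using A_cst by simp
  hence S2: "(r + cst c) * (r + cst c) + (cst e * cst e - cst c * cst c) \<in> A"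
    using A_add[OF A_mult[OF rcA rcA]] by blast
  have "(r - cst e) * (r - cst e) + (cst c * r + cst c * r + cst e * r + cst e * r)
      = (r + cst c) * (r + cst c) + (cst e * cst e - cst c * cst c)"
    by (simp add: algebra_simps)
  thus False using S1 S2 notAB by simp
qed

lemma B_shift_pos:
  assumes r: "r \<in> B" and c: "c > 0" shows "r + cst c \<in> B"
proof -
  obtain n :: nat where n: "of_rat c / E r < of_nat n" using reals_Archimedean2 by blast
  have Er: "E r > 0" using B_pos[OF r] .
  have "of_rat c / E r > 0" using c Er by (simp add: of_rat_pos)
  hence n0: "n > 0" using n by (cases n) auto
  define d where "d = c / of_nat n"
  have d0: "d > 0" using c n0 by (simp add: d_def)
  have dE: "of_rat d < E r" using n Er n0 by (simp add: d_def of_rat_divide field_simps)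
  have "r + cst (of_nat k * d) \<in> B" for k
  proof (induct k)
    case 0 thus ?case using r by (simp add: cst_0)
  next
    case (Suc k)
    have "E (r + cst (of_nat k * d)) \<ge> E r" using d0 by (simp add: E_add E_cst)
    hence "(r + cst (of_nat k * d)) + cst d \<in> B" using B_shift_small[OF Suc d0] dE by simp
    moreover have "(r + cst (of_nat k * d)) + cst d = r + cst (of_nat (Suc k) * d)"
      by (simp add: cst_add algebra_simps)
    ultimately show ?case by simp
  qed
  from this[of n] show ?thesis using n0 by (simp add: d_def)
qed

lemma shiftB: assumes r: "r \<in> B" and p: "E (r + cst c) > 0" shows "r + cst c \<in> B"
proof (cases "c > 0")
  case True thus ?thesis using B_shift_pos r by simp
next
  case False
  show ?thesis
  proof (cases "c = 0")
    case True thus ?thesis using r by (simp add: cst_0)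
  next
    case False
    hence c: "- c > 0" using \<open>\<not> c > 0\<close> by simp
    show ?thesis
    proof (rule ccontr)
      assume "r + cst c \<notin> B"
      hence "r + cst c \<in> A" using AorB p by blast
      hence "(r + cst c) + cst (-c) \<in> A" using A_add A_cst c by simp
      thus False using r notAB by (simp add: cst_minus)
    qed
  qed
qed

lemma shiftA: assumes r: "r \<in> A" and p: "E (r + cst c) > 0" shows "r + cst c \<in> A"
proof (rule ccontr)
  assume "r + cst c \<notin> A"
  hence "r + cst c \<in> B" using AorB p by blast
  moreover have "E ((r + cst c) + cst (-c)) > 0" using A_pos[OF r] by (simp add: cst_minus)
  ultimately have "(r + cst c) + cst (-c) \<in> B" using shiftB by blast
  thus False using r notAB by (simp add: cst_minus)
qed

definition CB :: "ratfun \<Rightarrow> bool" where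
  "CB r \<longleftrightarrow> (\<exists>c. E (r + cst c) > 0 \<and> r + cst c \<in> B)"

lemma ex_shift: "\<exists>c. E (r + cst c) > 0"
proof -
  obtain c where "- E r < of_rat c" using rat_above by blast
  thus ?thesis by (intro exI[of _ c]) (simp add: E_add E_cst)
qed

lemma CB_iff: assumes "E (r + cst c) > 0" shows "CB r \<longleftrightarrow> r + cst c \<in> B"
proof
  assume "CB r"
  then obtain d where d: "E (r + cst d) > 0" "r + cst d \<in> B" by (auto simp: CB_def)
  have "E ((r + cst d) + cst (c - d)) > 0" using assms by (simp add: cst_diff)
  hence "(r + cst d) + cst (c - d) \<in> B" using shiftB d by blast
  thus "r + cst c \<in> B" by (simp add: cst_diff)
qed (use assms in \<open>auto simp: CB_def\<close>)

lemma nCB_iff: assumes "E (r + cst c) > 0" shows "\<not> CB r \<longleftrightarrow> r + cst c \<in> A"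
  using CB_iff[OF assms] assms AorB notAB by blast

lemma CB_iff0: "E r > 0 \<Longrightarrow> CB r \<longleftrightarrow> r \<in> B"
  using CB_iff[of r 0] by (simp add: cst_0)

lemma nCB_iff0: "E r > 0 \<Longrightarrow> \<not> CB r \<longleftrightarrow> r \<in> A"
  using nCB_iff[of r 0] by (simp add: cst_0)

lemma CB_add: assumes "CB r" "CB s" shows "CB (r + s)"
proof -
  obtain c where c: "E (r + cst c) > 0" "r + cst c \<in> B" using assms(1) by (auto simp: CB_def)
  obtain d where d: "E (s + cst d) > 0" "s + cst d \<in> B" using assms(2) by (auto simp: CB_def)
  have "(r + cst c) + (s + cst d) \<in> B" using B_add c d by blast
  moreover have "(r + cst c) + (s + cst d) = (r + s) + cst (c + d)" by (simp add: cst_add algebra_simps)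
  ultimately show ?thesis unfolding CB_def using B_pos by metis
qed

lemma nCB_add: assumes "\<not> CB r" "\<not> CB s" shows "\<not> CB (r + s)"
proof -
  obtain c where c: "E (r + cst c) > 0" using ex_shift by blast
  obtain d where d: "E (s + cst d) > 0" using ex_shift by blast
  have "(r + cst c) + (s + cst d) \<in> A" using A_add nCB_iff[OF c] nCB_iff[OF d] assms by blast
  moreover have "(r + cst c) + (s + cst d) = (r + s) + cst (c + d)" by (simp add: cst_add algebra_simps)
  ultimately show ?thesis using nCB_iff A_pos by metis
qed

lemma CB_shift: "CB (r + cst c) \<longleftrightarrow> CB r"
proof -
  obtain d where d: "E (r + cst d) > 0" using ex_shift by blast
  have "E ((r + cst c) + cst (d - c)) > 0" using d by (simp add: cst_diff)
  hence "CB (r + cst c) \<longleftrightarrow> (r + cst c) + cst (d - c) \<in> B" by (rule CB_iff)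
  also have "(r + cst c) + cst (d - c) = r + cst d" by (simp add: cst_diff)
  finally show ?thesis using CB_iff[OF d] by simp
qed

lemma CB_scale: assumes c: "c > 0" shows "CB (cst c * r) \<longleftrightarrow> CB r"
proof -
  obtain d where d: "E (r + cst d) > 0" using ex_shift by blast
  have eq: "cst c * (r + cst d) = cst c * r + cst (c * d)" by (simp add: cst_mult algebra_simps)
  have pos: "E (cst c * r + cst (c * d)) > 0" using d c by (simp add: eq[symmetric] E_cmult)
  show ?thesis
  proof
    assume "CB (cst c * r)"
    hence "cst c * (r + cst d) \<in> B" using CB_iff[OF pos] eq by simp
    hence "cst (1/c) * (cst c * (r + cst d)) \<in> B" using scaleB c by simp
    hence "r + cst d \<in> B" using c by (simp add: mult.assoc[symmetric] cst_mult[symmetric] cst_1)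
    thus "CB r" using CB_iff[OF d] by simp
  next
    assume "CB r"
    hence "cst c * (r + cst d) \<in> B" using CB_iff[OF d] scaleB c by simp
    thus "CB (cst c * r)" using CB_iff[OF pos] eq by simp
  qed
qed

lemma CB_neg: assumes "CB r" shows "\<not> CB (- r)"
proof
  assume "CB (- r)"
  then obtain d where d: "E (- r + cst d) > 0" "- r + cst d \<in> B" by (auto simp: CB_def)
  obtain c where c: "E (r + cst c) > 0" "r + cst c \<in> B" using assms by (auto simp: CB_def)
  have "(r + cst c) + (- r + cst d) \<in> B" using B_add c d by blast
  moreover have "(r + cst c) + (- r + cst d) = cst (c + d)" by (simp add: cst_add)
  moreover have "c + d > 0"
  proof -
    have eq: "(r + cst c) + (- r + cst d) = cst (c + d)" by (simp add: cst_add)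
    have "E ((r + cst c) + (- r + cst d)) > 0" using c d by (simp only: E_add)
    hence "E (cst (c + d)) > 0" by (simp only: eq)
    thus ?thesis by (simp add: E_cst of_rat_pos)
  qed
  ultimately show False using A_cst notAB by metis
qed

lemma CB_cst: "\<not> CB (cst c)"
proof
  assume "CB (cst c)"
  then obtain d where d: "E (cst c + cst d) > 0" "cst c + cst d \<in> B" by (auto simp: CB_def)
  have "c + d > 0" using d(1) by (simp add: cst_add[symmetric] E_cst)
  thus False using d(2) A_cst notAB by (metis cst_add)
qed

definition good :: "real \<Rightarrow> ratfun \<Rightarrow> bool" where
  "good t r \<longleftrightarrow> (t * D r > 0 \<longrightarrow> CB r) \<and> (t * D r < 0 \<longrightarrow> \<not> CB r)"

end


context part begin

lemma good_cst: "good t (cst c)" by (simp add: good_def D_cst)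

lemma good_shift: "good t (r + cst c) \<longleftrightarrow> good t r"
  by (simp add: good_def D_add D_cst CB_shift)

lemma good_scale: assumes c: "c > 0" shows "good t (cst c * r) \<longleftrightarrow> good t r"
proof -
  have c': "(0::real) < of_rat c" using c by (simp add: of_rat_pos)
  have "D (cst c * r) = of_rat c * D r" by (rule D_cmult)
  hence e: "t * D (cst c * r) = of_rat c * (t * D r)" by simp
  have p: "t * D (cst c * r) > 0 \<longleftrightarrow> t * D r > 0" unfolding e using c' by (simp add: zero_less_mult_iff)
  have n: "t * D (cst c * r) < 0 \<longleftrightarrow> t * D r < 0" unfolding e using c' by (simp add: mult_less_0_iff)
  show ?thesis by (simp only: good_def p n CB_scale[OF c])
qed

lemma CB_negI:
  assumes t: "t \<noteq> 0" and g1: "good t U" and g2: "good t (- U)" and DU: "D U \<noteq> 0" and n: "\<not> CB U"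
  shows "CB (- U)"
proof -
  have a: "\<not> t * D U > 0" using g1 n by (auto simp: good_def)
  have b: "t * D U \<noteq> 0" using t DU by simp
  have "t * D U < 0" using a b by linarith
  hence "t * D (- U) > 0" by (simp add: D_uminus)
  thus ?thesis using g2 by (simp add: good_def)
qed

lemma prodexp: "(U + cst a) * (V + cst b) = (U * V + cst b * U + cst a * V) + cst (a * b)"
  by (simp add: algebra_simps cst_mult)

lemma prodexp2: "(- U + cst (-a)) * (- V + cst (-b)) = (U * V + cst b * U + cst a * V) + cst (a * b)"
  by (simp add: algebra_simps cst_mult cst_minus)

lemma prodexp3: "(- U + cst (-a)) * (V + cst b) = - (U * V + cst b * U + cst a * V) + cst (- (a * b))"
  by (simp add: algebra_simps cst_mult cst_minus)

lemma prodexp4: "(U + cst a) * (- V + cst (-b)) = - (U * V + cst b * U + cst a * V) + cst (- (a * b))"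
  by (simp add: algebra_simps cst_mult cst_minus)

lemma CB_of_B: "x \<in> B \<Longrightarrow> x = y + cst c \<Longrightarrow> CB y"
  using CB_iff0 B_pos CB_shift by metis

lemma nCB_of_A: "x \<in> A \<Longrightarrow> x = y + cst c \<Longrightarrow> \<not> CB y"
  using nCB_iff0 A_pos CB_shift by metis

lemma inB: "CB U \<Longrightarrow> E (U + cst a) > 0 \<Longrightarrow> U + cst a \<in> B"
  using CB_iff by blast

lemma inA: "\<not> CB U \<Longrightarrow> E (U + cst a) > 0 \<Longrightarrow> U + cst a \<in> A"
  using nCB_iff by blast

lemma prod_core:
  assumes t: "t \<noteq> 0"
    and H: "\<And>a b c. good t (cst c * W + cst b * U + cst a * V)"
    and CU: "CB U" and DV: "D V \<noteq> 0"
  shows "good t (U * V + W)"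
proof -
  have Hc: "good t (W - cst b * U - cst a * V)" for a b
    using H[where a="-a" and b="-b" and c=1] by (simp add: cst_1 cst_minus)
  have gV: "good t V" using H[where a=1 and b=0 and c=0] by (simp add: cst_0 cst_1)
  have gV': "good t (- V)" using H[where a="-1" and b=0 and c=0] by (simp add: cst_0 cst_1 cst_minus)
  define M where "M = t * D (U * V + W)"
  have key: "t * D (W - cst b * U - cst a * V)
      = M - (of_rat b - (- E V)) * (t * D U) - (of_rat a - (- E U)) * (t * D V)" for a b
    by (simp add: M_def D_diff D_add D_mult D_cmult D_cst E_cst algebra_simps)
  have EUa: "E (U + cst a) = of_rat a - (- E U)" for a by (simp add: E_add E_cst)
  have EVb: "E (V + cst b) = of_rat b - (- E V)" for b by (simp add: E_add E_cst)
  have EUa': "E (- U + cst (-a)) = - 1 * (of_rat a - (- E U))" for a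
    by (simp add: E_add E_diff E_cst E_uminus of_rat_minus)
  have EVb': "E (- V + cst (-b)) = - 1 * (of_rat b - (- E V))" for b
    by (simp add: E_add E_diff E_cst E_uminus of_rat_minus)
  have eqW: "(U * V + cst b * U + cst a * V) + (W - cst b * U - cst a * V) = U * V + W" for a b
    by (simp add: algebra_simps)
  have eqW': "(U * V + W) + - (U * V + cst b * U + cst a * V) = W - cst b * U - cst a * V" for a b
    by (simp add: algebra_simps)
  have pick_pos: "M > 0 \<Longrightarrow> s1 = 1 \<or> s1 = -1 \<Longrightarrow> s2 = 1 \<or> s2 = -1 \<Longrightarrow>
      \<exists>a b. s1 * (of_rat a - (- E U)) > 0 \<and> s2 * (of_rat b - (- E V)) > 0 \<and>
        t * D (W - cst b * U - cst a * V) > 0" for s1 s2 :: real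
    unfolding key by (rule pick_ab)
  have pick_neg: "M < 0 \<Longrightarrow> s1 = 1 \<or> s1 = -1 \<Longrightarrow> s2 = 1 \<or> s2 = -1 \<Longrightarrow>
      \<exists>a b. s1 * (of_rat a - (- E U)) > 0 \<and> s2 * (of_rat b - (- E V)) > 0 \<and>
        t * D (W - cst b * U - cst a * V) < 0" for s1 s2 :: real
  proof -
    assume "M < 0" "s1 = 1 \<or> s1 = -1" "s2 = 1 \<or> s2 = -1"
    then obtain a b where ab: "s1 * (of_rat a - (- E U)) > 0" "s2 * (of_rat b - (- E V)) > 0"
      "- M - (of_rat b - (- E V)) * (- (t * D U)) - (of_rat a - (- E U)) * (- (t * D V)) > 0"
      using pick_ab[of "- M" s1 s2 "- E U" "- E V" "- (t * D U)" "- (t * D V)"] by auto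
    have "t * D (W - cst b * U - cst a * V) < 0" unfolding key using ab(3) by simp
    thus ?thesis using ab(1,2) by blast
  qed
  have nCU': "\<not> CB (- U)" using CB_neg[OF CU] .
  show ?thesis
  proof (cases "CB V")
    case True
    have nCV': "\<not> CB (- V)" using CB_neg[OF True] .
    have pos: "M > 0 \<Longrightarrow> CB (U * V + W)"
    proof -
      assume "M > 0"
      then obtain a b where ab: "1 * (of_rat a - (- E U)) > 0" "1 * (of_rat b - (- E V)) > 0"
        "t * D (W - cst b * U - cst a * V) > 0" using pick_pos[of 1 1] by auto
      have "(U + cst a) * (V + cst b) \<in> B"
        using B_mult inB[OF CU] inB[OF True] ab EUa EVb by simp
      hence "CB (U * V + cst b * U + cst a * V)" using CB_of_B prodexp by blast
      moreover have "CB (W - cst b * U - cst a * V)" using Hc ab(3) by (auto simp: good_def)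
      ultimately show ?thesis using CB_add eqW by metis
    qed
    have neg: "M < 0 \<Longrightarrow> \<not> CB (U * V + W)"
    proof -
      assume "M < 0"
      then obtain a b where ab: "-1 * (of_rat a - (- E U)) > 0" "-1 * (of_rat b - (- E V)) > 0"
        "t * D (W - cst b * U - cst a * V) < 0" using pick_neg[of "-1" "-1"] by auto
      have "(- U + cst (-a)) * (- V + cst (-b)) \<in> A"
        using A_mult inA[OF nCU'] inA[OF nCV'] ab EUa' EVb' by simp
      hence "\<not> CB (U * V + cst b * U + cst a * V)" using nCB_of_A prodexp2 by blast
      moreover have "\<not> CB (W - cst b * U - cst a * V)" using Hc ab(3) by (auto simp: good_def)
      ultimately show ?thesis using nCB_add eqW by metis
    qed
    show ?thesis using pos neg by (auto simp: good_def M_def)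
  next
    case False
    have CV': "CB (- V)" using CB_negI[OF t gV gV' DV False] .
    have pos: "M > 0 \<Longrightarrow> CB (U * V + W)"
    proof (rule ccontr)
      assume "M > 0" and nc: "\<not> CB (U * V + W)"
      then obtain a b where ab: "-1 * (of_rat a - (- E U)) > 0" "1 * (of_rat b - (- E V)) > 0"
        "t * D (W - cst b * U - cst a * V) > 0" using pick_pos[of "-1" 1] by auto
      have "(- U + cst (-a)) * (V + cst b) \<in> A"
        using A_mult inA[OF nCU'] inA[OF False] ab EUa' EVb by simp
      hence "\<not> CB (- (U * V + cst b * U + cst a * V))" using nCB_of_A prodexp3 by blast
      hence "\<not> CB (W - cst b * U - cst a * V)" using nCB_add[OF nc] eqW' by metis
      thus False using Hc ab(3) by (auto simp: good_def)
    qed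
    have neg: "M < 0 \<Longrightarrow> \<not> CB (U * V + W)"
    proof
      assume "M < 0" and c: "CB (U * V + W)"
      then obtain a b where ab: "1 * (of_rat a - (- E U)) > 0" "-1 * (of_rat b - (- E V)) > 0"
        "t * D (W - cst b * U - cst a * V) < 0" using pick_neg[of 1 "-1"] by auto
      have "(U + cst a) * (- V + cst (-b)) \<in> B"
        using B_mult inB[OF CU] inB[OF CV'] ab EUa EVb' by simp
      hence "CB (- (U * V + cst b * U + cst a * V))" using CB_of_B prodexp4 by blast
      hence "CB (W - cst b * U - cst a * V)" using CB_add[OF c] eqW' by metis
      thus False using Hc ab(3) by (auto simp: good_def)
    qed
    show ?thesis using pos neg by (auto simp: good_def M_def)
  qed
qed

lemma prod_good:
  assumes H: "\<And>a b c. good t (cst c * W + cst b * U + cst a * V)"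
  shows "good t (U * V + W)"
proof (cases "t = 0")
  case True thus ?thesis by (simp add: good_def)
next
  case t: False
  show ?thesis
  proof (cases "D U = 0")
    case True
    then obtain u where u: "U = cst u" using D_zero_const by blast
    have "U * V + W = cst 1 * W + cst 0 * U + cst u * V" by (simp add: u cst_0 cst_1 algebra_simps)
    thus ?thesis using H by simp
  next
    case DU: False
    show ?thesis
    proof (cases "D V = 0")
      case True
      then obtain v where v: "V = cst v" using D_zero_const by blast
      have "U * V + W = cst 1 * W + cst v * U + cst 0 * V" by (simp add: v cst_0 cst_1 algebra_simps)
      thus ?thesis using H by simp
    next
      case DV: False
      show ?thesis
      proof (cases "CB U")
        case True thus ?thesis using prod_core[OF t H True DV] by blast
      next
        case nU: False
        show ?thesis
        proof (cases "CB V")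
          case True
          have "good t (V * U + W)"
            by (rule prod_core[OF t _ True DU]) (use H in \<open>simp add: algebra_simps\<close>)
          thus ?thesis by (simp add: mult.commute)
        next
          case False
          have gU: "good t U" using H[where a=0 and b=1 and c=0] by (simp add: cst_0 cst_1)
          have gU': "good t (- U)" using H[where a=0 and b="-1" and c=0] by (simp add: cst_0 cst_1 cst_minus)
          have CU': "CB (- U)" using CB_negI[OF t gU gU' DU nU] .
          have H': "good t (cst c * W + cst b * (- U) + cst a * (- V))" for a b c
            using H[where a="-a" and b="-b" and c=c] by (simp add: cst_minus)
          have "good t ((- U) * (- V) + W)"
            by (rule prod_core[OF t H' CU']) (simp add: D_uminus DV)
          thus ?thesis by simp
        qed
      qed
    qed
  qed
qed

lemma prod_nCB:
  assumes H: "\<And>a b c. \<not> CB (cst c * W + cst b * U + cst a * V)"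
  shows "\<not> CB (U * V + W)"
proof -
  have nU: "\<not> CB U" using H[where a=0 and b=1 and c=0] by (simp add: cst_0 cst_1)
  have nV: "\<not> CB V" using H[where a=1 and b=0 and c=0] by (simp add: cst_0 cst_1)
  obtain a where a: "E (U + cst a) > 0" using ex_shift by blast
  obtain b where b: "E (V + cst b) > 0" using ex_shift by blast
  have "(U + cst a) * (V + cst b) \<in> A" using A_mult inA[OF nU a] inA[OF nV b] by blast
  hence "\<not> CB (U * V + cst b * U + cst a * V)" using nCB_of_A prodexp by blast
  moreover have "\<not> CB (W - cst b * U - cst a * V)"
    using H[where a="-a" and b="-b" and c=1] by (simp add: cst_1 cst_minus)
  moreover have "(U * V + cst b * U + cst a * V) + (W - cst b * U - cst a * V) = U * V + W"
    by (simp add: algebra_simps)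
  ultimately show ?thesis using nCB_add by metis
qed

end


definition PY :: "ratfun \<Rightarrow> rat poly \<Rightarrow> ratfun" where
  "PY y p = poly (map_poly cst p) y"

lemma mp_add: "map_poly cst (p + q) = map_poly cst p + map_poly cst q"
  by (rule poly_eqI) (simp add: coeff_map_poly cst_0 cst_add)

lemma PY_add: "PY y (p + q) = PY y p + PY y q"
  by (simp add: PY_def mp_add)

lemma PY_smult: "PY y (smult a p) = cst a * PY y p"
  by (simp add: PY_def map_poly_smult cst_0 cst_mult)

lemma PY_pCons: "PY y (pCons a p) = cst a + y * PY y p"
  by (simp add: PY_def map_poly_pCons cst_0)

lemma PY_0: "PY y 0 = 0" by (simp add: PY_def)

lemma PY_const: "PY y [:c:] = cst c" by (simp add: PY_pCons PY_0)

lemma PY_X: "PY y [:0, 1:] = y" by (simp add: PY_pCons PY_0 cst_0 cst_1)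

lemma PY_mult: "PY y (p * q) = PY y p * PY y q"
proof (induct p)
  case 0 thus ?case by (simp add: PY_0)
next
  case (pCons a p)
  have "PY y (pCons a p * q) = PY y (smult a q + pCons 0 (p * q))" by simp
  also have "\<dots> = cst a * PY y q + y * (PY y p * PY y q)"
    by (simp only: PY_add PY_smult PY_pCons pCons cst_0 add_0_left)
  also have "\<dots> = PY y (pCons a p) * PY y q" by (simp add: PY_pCons algebra_simps)
  finally show ?case .
qed

lemma PY_minus: "PY y (- p) = - PY y p"
  using PY_smult[of y "-1" p] by (simp add: cst_minus cst_1)

lemma PY_X0: "PY X0 p = to_fract p"
proof (induct p)
  case 0 thus ?case by (simp add: PY_0)
next
  case (pCons a p)
  have "pCons a p = [:a:] + [:0, 1:] * p" by simp
  hence "to_fract (pCons a p) = cst a + X0 * to_fract p"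
    by (metis cst_def X0_def to_fract_add to_fract_mult)
  thus ?case using pCons by (simp add: PY_pCons)
qed

lemma poly_ind:
  assumes base: "\<And>a b. Q (cst a + cst b * y)"
    and step: "\<And>U V W. (\<And>a b c. Q (cst c * W + cst b * U + cst a * V)) \<Longrightarrow> Q (U * V + W)"
  shows "Q (PY y p)"
proof -
  have "\<forall>p. degree p \<le> Suc n \<longrightarrow> Q (PY y p)" for n
  proof (induct n)
    case 0
    show ?case
    proof (intro allI impI)
      fix p :: "rat poly" assume d: "degree p \<le> Suc 0"
      obtain c0 p1 where p: "p = pCons c0 p1" by (cases p)
      have "degree p1 = 0" using d p by (cases "p1 = 0") auto
      then obtain c1 where "p1 = [:c1:]" by (metis degree_eq_zeroE)
      hence "PY y p = cst c0 + cst c1 * y" using p by (simp add: PY_pCons PY_const PY_0 mult.commute)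
      thus "Q (PY y p)" using base by simp
    qed
  next
    case (Suc n)
    show ?case
    proof (intro allI impI)
      fix p :: "rat poly" assume d: "degree p \<le> Suc (Suc n)"
      obtain c0 p1 where p: "p = pCons c0 p1" by (cases p)
      have d1: "degree p1 \<le> Suc n" using d p by (cases "p1 = 0") auto
      have "Q (y * PY y p1 + cst c0)"
      proof (rule step)
        fix a b c
        define r where "r = smult a p1 + [:c * c0, b:]"
        have "degree (smult a p1) \<le> Suc n" using d1 degree_smult_le order.trans by blast
        moreover have "degree [:c * c0, b:] \<le> Suc n" by simp
        ultimately have "degree r \<le> Suc n" unfolding r_def by (rule degree_add_le)
        hence "Q (PY y r)" using Suc by blast
        moreover have "PY y r = cst c * cst c0 + cst b * y + cst a * PY y p1"
          by (simp add: r_def PY_add PY_smult PY_pCons PY_0 cst_mult algebra_simps)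
        ultimately show "Q (cst c * cst c0 + cst b * y + cst a * PY y p1)" by simp
      qed
      moreover have "PY y p = y * PY y p1 + cst c0" using p by (simp add: PY_pCons add.commute)
      ultimately show "Q (PY y p)" by simp
    qed
  qed
  thus ?thesis by (metis le_SucI order.refl)
qed

lemma exG_real:
  fixes Eg Dg Ey Dy t sg :: real
  assumes Eg: "Eg \<noteq> 0" and Dy: "Dy \<noteq> 0" and t: "t \<noteq> 0" and sg: "sg = 1 \<or> sg = -1"
  shows "\<exists>q s::rat. (s = 1 \<or> s = -1) \<and> of_rat s * (Ey - of_rat q) > 0 \<and>
     sg * t * (2 * Eg * Dg * (of_rat s * (Ey - of_rat q)) + Eg^2 * (of_rat s * Dy)) > 0"
proof -
  define s :: rat where "s = (if sg * t * Dy > 0 then 1 else -1)"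
  have s: "s = 1 \<or> s = -1" by (simp add: s_def)
  have K: "sg * t * (Eg^2 * (of_rat s * Dy)) = Eg^2 * \<bar>t * Dy\<bar>"
    using sg by (auto simp: s_def abs_if algebra_simps)
  have K0: "Eg^2 * \<bar>t * Dy\<bar> > 0" using Eg Dy t by simp
  define d where "d = Eg^2 * \<bar>t * Dy\<bar> / (2 * \<bar>2 * Eg * Dg * t\<bar> + 1)"
  have d0: "d > 0" using K0 by (simp add: d_def add_pos_nonneg)
  obtain q where q: "of_rat s * (Ey - of_rat q) > 0" "of_rat s * (Ey - of_rat q) < d"
  proof (cases "s = 1")
    case True
    obtain q where "Ey - d < of_rat q" "of_rat q < Ey" using rat_between[of "Ey - d" Ey] d0 by auto
    thus ?thesis using that True by auto
  next
    case False
    hence "s = -1" using s by simp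
    moreover obtain q where "Ey < of_rat q" "of_rat q < Ey + d" using rat_between[of Ey "Ey + d"] d0 by auto
    ultimately show ?thesis using that by (auto simp: of_rat_minus)
  qed
  define e where "e = of_rat s * (Ey - of_rat q)"
  have "\<bar>sg * t * (2 * Eg * Dg * e)\<bar> \<le> \<bar>2 * Eg * Dg * t\<bar> * d"
  proof -
    have e0: "e > 0" using q(1) by (simp add: e_def)
    have "\<bar>sg * t * (2 * Eg * Dg * e)\<bar> = \<bar>sg\<bar> * (\<bar>2 * Eg * Dg * t\<bar> * \<bar>e\<bar>)"
      by (simp add: abs_mult mult_ac)
    also have "\<dots> = \<bar>2 * Eg * Dg * t\<bar> * e" using sg e0 by auto
    also have "\<dots> \<le> \<bar>2 * Eg * Dg * t\<bar> * d" using q(2) by (simp add: e_def mult_left_mono)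
    finally show ?thesis .
  qed
  moreover have "\<bar>2 * Eg * Dg * t\<bar> * d < Eg^2 * \<bar>t * Dy\<bar>"
  proof -
    have "\<bar>2 * Eg * Dg * t\<bar> * d \<le> (2 * \<bar>2 * Eg * Dg * t\<bar> + 1) * d / 2"
      using d0 by (simp add: field_simps)
    also have "\<dots> = Eg^2 * \<bar>t * Dy\<bar> / 2" by (simp add: d_def)
    finally show ?thesis using K0 by simp
  qed
  ultimately have "sg * t * (2 * Eg * Dg * e) + sg * t * (Eg^2 * (of_rat s * Dy)) > 0"
    using K by linarith
  hence "sg * t * (2 * Eg * Dg * e + Eg^2 * (of_rat s * Dy)) > 0" by (simp add: algebra_simps)
  thus ?thesis using s q(1) by (auto simp: e_def)
qed

context part begin

lemma good_lin:
  assumes g1: "good t y" and g2: "good t (- y)"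
  shows "good t (cst a + cst b * y)"
proof -
  have "good t (cst b * y)"
  proof (cases "b > 0")
    case True thus ?thesis using good_scale g1 by simp
  next
    case False
    show ?thesis
    proof (cases "b = 0")
      case True thus ?thesis using good_cst[of t 0] by (simp add: cst_0)
    next
      case False
      hence b: "- b > 0" using \<open>\<not> b > 0\<close> by simp
      have eq: "cst b * y = cst (- b) * (- y)" by (simp add: cst_minus)
      have "good t (cst (- b) * (- y))" using good_scale[OF b, of t "- y"] g2 by blast
      thus ?thesis unfolding eq .
    qed
  qed
  hence "good t (cst b * y + cst a)" using good_shift by blast
  thus ?thesis by (simp add: add.commute)
qed

lemma good_PY:
  assumes "good t y" "good t (- y)"
  shows "good t (PY y p)"
  by (rule poly_ind[where Q="good t", OF good_lin[OF assms] prod_good])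

lemma nCB_lin:
  assumes g1: "\<not> CB y" and g2: "\<not> CB (- y)"
  shows "\<not> CB (cst a + cst b * y)"
proof -
  have "\<not> CB (cst b * y)"
  proof (cases "b > 0")
    case True thus ?thesis using CB_scale g1 by simp
  next
    case False
    show ?thesis
    proof (cases "b = 0")
      case True thus ?thesis using CB_cst[of 0] by (simp add: cst_0)
    next
      case False
      hence b: "- b > 0" using \<open>\<not> b > 0\<close> by simp
      have eq: "cst b * y = cst (- b) * (- y)" by (simp add: cst_minus)
      have "\<not> CB (cst (- b) * (- y))" using CB_scale[OF b, of "- y"] g2 by blast
      thus ?thesis unfolding eq .
    qed
  qed
  hence "\<not> CB (cst b * y + cst a)" using CB_shift by blast
  thus ?thesis by (simp add: add.commute)
qed

lemma nCB_PY:
  assumes "\<not> CB y" "\<not> CB (- y)"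
  shows "\<not> CB (PY y p)"
  by (rule poly_ind[where Q="\<lambda>r. \<not> CB r", OF nCB_lin[OF assms] prod_nCB])

lemma pick_c:
  fixes e0 K L :: real
  assumes "K > 0" "L > 0"
  shows "\<exists>c. of_rat c + e0 > 0 \<and> (of_rat c + e0) * L < K"
proof -
  obtain c where c: "- e0 < of_rat c" "of_rat c < - e0 + K / L"
    using rat_between[of "- e0" "- e0 + K / L"] assms by auto
  hence "(of_rat c + e0) * L < K" using assms by (simp add: field_simps)
  thus ?thesis using c by (intro exI[of _ c]) auto
qed

lemma inv_good:
  assumes t: "t \<noteq> 0" and allg: "\<And>p. good t (PY y p)" and Dy: "D y \<noteq> 0"
    and Tg: "T * PY y g = PY y f" and Eg: "E (PY y g) \<noteq> 0"
  shows "good t T"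
proof -
  define gy where "gy = PY y g"
  have exG: "\<exists>G. E G > 0 \<and> sg * (t * D G) > 0 \<and> good t G \<and> (\<forall>c. good t (T * G + cst c * G))"
    if sg: "sg = 1 \<or> sg = -1" for sg
  proof -
    obtain q s where qs: "s = 1 \<or> s = -1" "of_rat s * (E y - of_rat q) > 0"
      "sg * t * (2 * E gy * D gy * (of_rat s * (E y - of_rat q)) + (E gy)^2 * (of_rat s * D y)) > 0"
      using exG_real[OF Eg[folded gy_def] Dy t sg, where Dg="D gy" and Ey="E y"] by blast
    define l where "l = smult s [:- q, 1:]"
    have ly: "PY y l = cst s * (y - cst q)"
      by (simp add: l_def PY_smult PY_pCons PY_0 cst_minus cst_mult algebra_simps)
    define G where "G = PY y (g * g * l)"
    have G: "G = gy * gy * (cst s * (y - cst q))" by (simp add: G_def PY_mult ly gy_def)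
    have EG: "E G = (E gy)^2 * (of_rat s * (E y - of_rat q))"
      by (simp add: G E_mult E_cst E_diff power2_eq_square)
    have DG: "D G = 2 * E gy * D gy * (of_rat s * (E y - of_rat q)) + (E gy)^2 * (of_rat s * D y)"
      by (simp add: G E_mult E_cst E_diff D_mult D_diff D_cst power2_eq_square algebra_simps)
    have "E G > 0" using EG qs(2) Eg by (simp add: gy_def)
    moreover have "sg * (t * D G) > 0" using qs(3) DG by (simp add: mult.assoc)
    moreover have "good t G" using allg by (simp add: G_def)
    moreover have "good t (T * G + cst c * G)" for c
    proof -
      have "T * G + cst c * G = PY y (f * g * l + smult c (g * g * l))"
        by (simp add: G_def PY_add PY_smult PY_mult Tg[symmetric] algebra_simps)
      thus ?thesis using allg by simp
    qed
    ultimately show ?thesis by blast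
  qed
  have pos: "t * D T > 0 \<Longrightarrow> CB T"
  proof (rule ccontr)
    assume tT: "t * D T > 0" and nT: "\<not> CB T"
    obtain G where G: "E G > 0" "-1 * (t * D G) > 0" "good t G" "\<And>c. good t (T * G + cst c * G)"
      using exG[of "-1"] by auto
    have GA: "G \<in> A" using G(1,2,3) nCB_iff0 by (auto simp: good_def)
    obtain c where c: "of_rat c + E T > 0" "(of_rat c + E T) * (- (t * D G)) < t * D T * E G"
    proof -
      have "t * D T * E G > 0" using tT G(1) by (rule mult_pos_pos)
      thus ?thesis using pick_c[of "t * D T * E G" "- (t * D G)" "E T"] G(2) that by auto
    qed
    have "T + cst c \<in> A" using inA[OF nT] c(1) by (simp add: E_add E_cst add.commute)
    hence inA': "(T + cst c) * G \<in> A" using A_mult GA by blast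
    have eqp: "(T + cst c) * G = T * G + cst c * G" by (simp add: algebra_simps)
    have nc: "\<not> CB (T * G + cst c * G)" using nCB_iff0[OF A_pos[OF inA']] inA' unfolding eqp by blast
    have "t * D (T * G + cst c * G) = t * D T * E G + (of_rat c + E T) * (t * D G)"
      by (simp add: D_add D_mult D_cst E_cst algebra_simps)
    also have "\<dots> > 0" using c(2) by simp
    finally show False using G(4)[of c] nc by (auto simp: good_def)
  qed
  have neg: "t * D T < 0 \<Longrightarrow> \<not> CB T"
  proof
    assume tT: "t * D T < 0" and cT: "CB T"
    obtain G where G: "E G > 0" "1 * (t * D G) > 0" "good t G" "\<And>c. good t (T * G + cst c * G)"
      using exG[of 1] by auto
    have GB: "G \<in> B" using G(1,2,3) CB_iff0 by (auto simp: good_def)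
    obtain c where c: "of_rat c + E T > 0" "(of_rat c + E T) * (t * D G) < - (t * D T) * E G"
    proof -
      have "- (t * D T) > 0" using tT by simp
      hence "- (t * D T) * E G > 0" using G(1) by (rule mult_pos_pos)
      thus ?thesis using pick_c[of "- (t * D T) * E G" "t * D G" "E T"] G(2) that by auto
    qed
    have "T + cst c \<in> B" using inB[OF cT] c(1) by (simp add: E_add E_cst add.commute)
    hence inB': "(T + cst c) * G \<in> B" using B_mult GB by blast
    have eqp: "(T + cst c) * G = T * G + cst c * G" by (simp add: algebra_simps)
    have cc: "CB (T * G + cst c * G)" using CB_iff0[OF B_pos[OF inB']] inB' unfolding eqp by blast
    have "t * D (T * G + cst c * G) = t * D T * E G + (of_rat c + E T) * (t * D G)"
      by (simp add: D_add D_mult D_cst E_cst algebra_simps)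
    also have "\<dots> < 0" using c(2) by simp
    finally show False using G(4)[of c] cc by (auto simp: good_def)
  qed
  show ?thesis using pos neg by (simp add: good_def)
qed

end


lemma inv_cst: "c \<noteq> 0 \<Longrightarrow> inverse (cst c) = cst (inverse c)"
  by (simp add: cst_def to_fract_def eq_fract mult_to_poly one_pCons[symmetric])

lemma to_fract_rep: "g \<noteq> 0 \<Longrightarrow> Fract f g * to_fract g = to_fract f"
  by (simp add: to_fract_def eq_fract)

context part begin

lemma classify:
  assumes Bne: "B \<noteq> {}"
  shows "\<exists>t. (t = 1 \<or> t = -1) \<and> (\<forall>r. good t r)"
proof -
  have allg: "\<forall>r. good t r" if t: "t = 1 \<or> t = -1" and g1: "good t X0" and g2: "good t (- X0)" for t
  proof
    fix r :: ratfun
    obtain f g where fg: "g \<noteq> 0" "r = Fract f g" using fract_rep by blast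
    have t0: "t \<noteq> 0" using t by auto
    show "good t r"
    proof (rule inv_good[OF t0 good_PY[OF g1 g2]])
      show "D X0 \<noteq> 0" by (simp add: D_X0)
      show "r * PY X0 g = PY X0 f" using fg by (simp add: PY_X0 to_fract_rep)
      show "E (PY X0 g) \<noteq> 0" using fg by (simp add: PY_X0 E_nonzero)
    qed
  qed
  show ?thesis
  proof (cases "CB X0")
    case True
    have "good 1 X0" using True by (simp add: good_def D_X0)
    moreover have "good 1 (- X0)" using CB_neg[OF True] by (simp add: good_def D_X0 D_uminus)
    ultimately show ?thesis using allg[of 1] by auto
  next
    case nX: False
    show ?thesis
    proof (cases "CB (- X0)")
      case True
      have "good (-1) X0" using CB_neg[OF True] by (simp add: good_def D_X0)
      moreover have "good (-1) (- X0)" using True by (simp add: good_def D_X0 D_uminus)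
      ultimately show ?thesis using allg[of "-1"] by auto
    next
      case nX': False
      have polys: "\<not> CB (to_fract p)" for p using nCB_PY[OF nX nX', of p] by (simp add: PY_X0)
      obtain b0 where b0: "b0 \<in> B" using Bne by blast
      obtain f g where fg: "g \<noteq> 0" "b0 = Fract f g" using fract_rep by blast
      obtain f' g' where fg': "g' \<noteq> 0" "b0 = Fract f' g'" "E (to_fract g') > 0"
      proof (cases "E (to_fract g) > 0")
        case True thus ?thesis using that fg by blast
      next
        case False
        have "E (to_fract g) \<noteq> 0" using fg by (simp add: E_nonzero)
        hence p: "E (to_fract (- g)) > 0" using False by (simp add: E_uminus)
        have "b0 = Fract (- f) (- g)" using fg by simp
        moreover have "- g \<noteq> 0" using fg by simp
        ultimately show ?thesis using that[where f'="- f" and g'="- g"] p by blast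
      qed
      define G where "G = to_fract g'"
      define F where "F = to_fract f'"
      have G0: "G \<noteq> 0" using fg' by (simp add: G_def)
      have bG: "b0 * G = F" using fg' by (simp add: G_def F_def to_fract_rep)
      have EG: "E G > 0" using fg' by (simp add: G_def)
      have "E F > 0" using bG[symmetric] B_pos[OF b0] EG by (simp add: E_mult)
      hence FA: "F \<in> A" using nCB_iff0 polys[of f'] unfolding F_def by blast
      define z where "z = inverse G"
      have Ez: "E z > 0" using EG by (simp add: z_def E_inverse)
      have b0z: "b0 = F * z" using bG G0 by (simp add: z_def field_simps)
      have zB: "z \<in> B"
      proof (rule ccontr)
        assume "z \<notin> B"
        hence "z \<in> A" using AorB Ez by blast
        hence "b0 \<in> A" using A_mult FA b0z by simp
        thus False using b0 notAB by blast
      qed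
      have Cz: "CB z" using CB_iff0 Ez zB by blast
      have Dz: "D z \<noteq> 0"
      proof
        assume "D z = 0"
        then obtain c where "z = cst c" using D_zero_const by blast
        thus False using Cz CB_cst by simp
      qed
      define t' :: real where "t' = (if D z > 0 then 1 else -1)"
      have t'0: "t' \<noteq> 0" by (simp add: t'_def)
      have tz: "t' * D z > 0" using Dz by (auto simp: t'_def)
      have gz: "good t' z" using tz Cz by (simp add: good_def)
      have gz': "good t' (- z)" using tz CB_neg[OF Cz] by (simp add: good_def D_uminus)
      have allz: "good t' (PY z p)" for p using good_PY[OF gz gz'] .
      have PYz: "PY z [:0, 1:] = z" by (rule PY_X)
      have gG: "good t' G"
      proof (rule inv_good[OF t'0 allz Dz])
        have "PY z 1 = 1" using PY_const[of z 1] by (simp add: cst_1 one_pCons)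
        moreover have "G * z = 1" using G0 by (simp add: z_def)
        ultimately show "G * PY z [:0, 1:] = PY z 1" by (simp only: PYz)
        show "E (PY z [:0, 1:]) \<noteq> 0" using Ez by (simp add: PYz)
      qed
      have gG': "good t' (- G)"
      proof (rule inv_good[OF t'0 allz Dz])
        have "PY z [:- 1:] = - 1" using PY_const[of z "- 1"] by (simp add: cst_1 cst_minus)
        moreover have "- G * z = - 1" using G0 by (simp add: z_def)
        ultimately show "- G * PY z [:0, 1:] = PY z [:- 1:]" by (simp only: PYz)
        show "E (PY z [:0, 1:]) \<noteq> 0" using Ez by (simp add: PYz)
      qed
      have DG: "D G \<noteq> 0"
      proof
        assume "D G = 0"
        then obtain c where c: "G = cst c" using D_zero_const by blast
        hence "c \<noteq> 0" using G0 by (auto simp: cst_0)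
        hence "z = cst (inverse c)" using c by (simp add: z_def inv_cst)
        thus False using Cz CB_cst by simp
      qed
      have nG: "\<not> CB G" using polys by (simp add: G_def)
      have nG': "\<not> CB (- G)" using polys[of "- g'"] by (simp add: G_def)
      show ?thesis
      proof (cases "t' * D G > 0")
        case True thus ?thesis using gG nG by (simp add: good_def)
      next
        case False
        hence "t' * D (- G) > 0" using t'0 DG by (simp add: D_uminus) (simp add: not_less le_less)
        thus ?thesis using gG' nG' by (simp add: good_def)
      qed
    qed
  qed
qed

lemma B_char:
  assumes allg: "\<forall>r. good t r" and t0: "t \<noteq> 0"
  shows "B = {r. E r > 0 \<and> t * D r > 0}" "A = {r. E r > 0 \<and> \<not> t * D r > 0}"
proof -
  have B1: "r \<in> B \<longleftrightarrow> E r > 0 \<and> t * D r > 0" for r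
  proof
    assume rB: "r \<in> B"
    have Er: "E r > 0" using B_pos[OF rB] .
    have Cr: "CB r" using CB_iff0[OF Er] rB by simp
    have "t * D r > 0"
    proof (rule ccontr)
      assume "\<not> t * D r > 0"
      moreover have "\<not> t * D r < 0" using allg Cr by (auto simp: good_def)
      ultimately have "t * D r = 0" by simp
      hence "D r = 0" using t0 by simp
      then obtain c where "r = cst c" using D_zero_const by blast
      thus False using Cr CB_cst by simp
    qed
    thus "E r > 0 \<and> t * D r > 0" using Er by simp
  next
    assume "E r > 0 \<and> t * D r > 0"
    thus "r \<in> B" using allg CB_iff0 by (auto simp: good_def)
  qed
  thus "B = {r. E r > 0 \<and> t * D r > 0}" by blast
  show "A = {r. E r > 0 \<and> \<not> t * D r > 0}"
    using B1 AorB notAB A_pos by blast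
qed

end


lemma main_dir:
  fixes \<alpha> :: real and A B :: "ratfun set"
  assumes tr: "\<not> algebraic \<alpha>" and un: "A \<union> B = Qpos \<alpha>" and dis: "A \<inter> B = {}"
    and clA: "add_mult_closed A" and clB: "add_mult_closed B" and Bne: "B \<noteq> {}"
    and oneA: "1 \<in> A"
  shows "(A = Hplus \<alpha> \<union> Hzero \<alpha> \<and> B = Hminus \<alpha>) \<or> (A = Hzero \<alpha> \<union> Hminus \<alpha> \<and> B = Hplus \<alpha>)"
proof -
  interpret tctx \<alpha> by unfold_locales (rule tr)
  have Acst: "cst c \<in> A" if c: "c > 0" for c
  proof -
    have "ratfun_eval (cst c) \<alpha> > 0" using c by (simp add: E_cst of_rat_pos)
    hence "cst c * 1 \<in> A \<union> B" using un by (simp add: Qpos_def)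
    moreover have "\<forall>x\<in>A. \<forall>y\<in>A. x + y \<in> A" "\<forall>x\<in>B. \<forall>y\<in>B. x + y \<in> B"
      using clA clB by (auto simp: add_mult_closed_def)
    ultimately have "cst c * 1 \<in> A" using scale_gen[of A B 1 c] dis oneA c by blast
    thus ?thesis by simp
  qed
  interpret part \<alpha> A B
    by unfold_locales (use un dis clA clB Acst in \<open>auto simp: Qpos_def\<close>)
  obtain t where t: "t = 1 \<or> t = -1" "\<forall>r. good t r" using classify[OF Bne] by blast
  have t0: "t \<noteq> 0" using t(1) by auto
  note ch = B_char[OF t(2) t0]
  show ?thesis
  proof (cases "t = 1")
    case True
    have "B = Hplus \<alpha>" using ch(1) True by (auto simp: Hplus_def Qpos_def)
    moreover have "A = Hzero \<alpha> \<union> Hminus \<alpha>" using ch(2) True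
      by (auto simp: Hzero_def Hminus_def Qpos_def)
    ultimately show ?thesis by blast
  next
    case False
    hence tm: "t = -1" using t(1) by simp
    have "B = Hminus \<alpha>" using ch(1) tm by (auto simp: Hminus_def Qpos_def)
    moreover have "A = Hplus \<alpha> \<union> Hzero \<alpha>" using ch(2) tm
      by (auto simp: Hzero_def Hplus_def Qpos_def)
    ultimately show ?thesis by blast
  qed
qed

lemma valid_sets:
  fixes \<alpha> :: real
  assumes tr: "\<not> algebraic \<alpha>"
  shows "Hplus \<alpha> \<union> Hzero \<alpha> = {r. ratfun_eval r \<alpha> > 0 \<and> ratfun_deriv r \<alpha> \<ge> 0}"
    and "Hzero \<alpha> \<union> Hminus \<alpha> = {r. ratfun_eval r \<alpha> > 0 \<and> ratfun_deriv r \<alpha> \<le> 0}"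
    and "Hplus \<alpha> = {r. ratfun_eval r \<alpha> > 0 \<and> ratfun_deriv r \<alpha> > 0}"
    and "Hminus \<alpha> = {r. ratfun_eval r \<alpha> > 0 \<and> ratfun_deriv r \<alpha> < 0}"
    and "Qpos \<alpha> = {r. ratfun_eval r \<alpha> > 0}"
  by (auto simp: Hplus_def Hzero_def Hminus_def Qpos_def)

lemma valid_closed:
  fixes \<alpha> :: real
  assumes tr: "\<not> algebraic \<alpha>"
  shows "add_mult_closed {r. ratfun_eval r \<alpha> > 0 \<and> ratfun_deriv r \<alpha> \<ge> 0}"
    and "add_mult_closed {r. ratfun_eval r \<alpha> > 0 \<and> ratfun_deriv r \<alpha> \<le> 0}"
    and "add_mult_closed {r. ratfun_eval r \<alpha> > 0 \<and> ratfun_deriv r \<alpha> > 0}"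
    and "add_mult_closed {r. ratfun_eval r \<alpha> > 0 \<and> ratfun_deriv r \<alpha> < 0}"
proof -
  interpret tctx \<alpha> by unfold_locales (rule tr)
  show "add_mult_closed {r. ratfun_eval r \<alpha> > 0 \<and> ratfun_deriv r \<alpha> \<ge> 0}"
    by (auto simp: add_mult_closed_def E_add E_mult D_add D_mult intro: add_nonneg_nonneg mult_nonneg_nonneg)
  have h: "b * c + a * d \<le> 0" if "0 < a" "b \<le> 0" "0 < c" "d \<le> 0" for a b c d :: real
    using mult_nonpos_nonneg[of b c] mult_nonneg_nonpos[of a d] that by linarith
  show "add_mult_closed {r. ratfun_eval r \<alpha> > 0 \<and> ratfun_deriv r \<alpha> \<le> 0}"
    by (auto simp: add_mult_closed_def E_add E_mult D_add D_mult intro: h)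
  have h2: "0 < b * c + a * d" if "0 < a" "0 < b" "0 < c" "0 < d" for a b c d :: real
    using mult_pos_pos[of b c] mult_pos_pos[of a d] that by linarith
  have h3: "b * c + a * d < 0" if "0 < a" "b < 0" "0 < c" "d < 0" for a b c d :: real
    using mult_neg_pos[of b c] mult_pos_neg[of a d] that by linarith
  show "add_mult_closed {r. ratfun_eval r \<alpha> > 0 \<and> ratfun_deriv r \<alpha> > 0}"
    by (auto simp: add_mult_closed_def E_add E_mult D_add D_mult intro: h2)
  show "add_mult_closed {r. ratfun_eval r \<alpha> > 0 \<and> ratfun_deriv r \<alpha> < 0}"
    by (auto simp: add_mult_closed_def E_add E_mult D_add D_mult intro: h3)
qed

lemma valid_nonempty:
  fixes \<alpha> :: real
  assumes tr: "\<not> algebraic \<alpha>"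
  shows "Hzero \<alpha> \<noteq> {}" "Hplus \<alpha> \<noteq> {}" "Hminus \<alpha> \<noteq> {}"
proof -
  interpret tctx \<alpha> by unfold_locales (rule tr)
  have "ratfun_eval 1 \<alpha> = 1" "ratfun_deriv 1 \<alpha> = 0"
    using E_cst[of 1] D_cst[of 1] by (simp_all add: cst_1)
  hence "1 \<in> Hzero \<alpha>" by (simp add: Hzero_def Qpos_def)
  thus "Hzero \<alpha> \<noteq> {}" by blast
  obtain q where q: "- \<alpha> < of_rat q" using rat_above by blast
  have "ratfun_eval (X0 + cst q) \<alpha> > 0" "ratfun_deriv (X0 + cst q) \<alpha> > 0"
    using q by (simp_all add: E_add E_X0 E_cst D_add D_X0 D_cst)
  hence "X0 + cst q \<in> Hplus \<alpha>" by (simp add: Hplus_def Qpos_def)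
  thus "Hplus \<alpha> \<noteq> {}" by blast
  obtain q' where q': "\<alpha> < of_rat q'" using rat_above by blast
  have "ratfun_eval (cst q' - X0) \<alpha> > 0" "ratfun_deriv (cst q' - X0) \<alpha> < 0"
    using q' by (simp_all add: E_diff E_X0 E_cst D_diff D_X0 D_cst)
  hence "cst q' - X0 \<in> Hminus \<alpha>" by (simp add: Hminus_def Qpos_def)
  thus "Hminus \<alpha> \<noteq> {}" by blast
qed

theorem theorem2p2:
  fixes \<alpha> :: real
  assumes "\<not> algebraic \<alpha>"
  shows "\<forall>A B. (A \<union> B = Qpos \<alpha> \<and> A \<inter> B = {} \<and> A \<noteq> {} \<and> B \<noteq> {}
                  \<and> add_mult_closed A \<and> add_mult_closed B)
         \<longleftrightarrow> ({A, B} = {Hplus \<alpha> \<union> Hzero \<alpha>, Hminus \<alpha>}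
              \<or> {A, B} = {Hplus \<alpha>, Hzero \<alpha> \<union> Hminus \<alpha>})"
proof (intro allI iffI)
  fix A B :: "ratfun set"
  assume h: "A \<union> B = Qpos \<alpha> \<and> A \<inter> B = {} \<and> A \<noteq> {} \<and> B \<noteq> {} \<and> add_mult_closed A \<and> add_mult_closed B"
  interpret tctx \<alpha> by unfold_locales (rule assms)
  have "ratfun_eval 1 \<alpha> = 1" using E_cst[of 1] by (simp add: cst_1)
  hence "1 \<in> Qpos \<alpha>" by (simp add: Qpos_def)
  hence "1 \<in> A \<or> 1 \<in> B" using h by auto
  thus "{A, B} = {Hplus \<alpha> \<union> Hzero \<alpha>, Hminus \<alpha>} \<or> {A, B} = {Hplus \<alpha>, Hzero \<alpha> \<union> Hminus \<alpha>}"
  proof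
    assume "1 \<in> A"
    hence "(A = Hplus \<alpha> \<union> Hzero \<alpha> \<and> B = Hminus \<alpha>) \<or> (A = Hzero \<alpha> \<union> Hminus \<alpha> \<and> B = Hplus \<alpha>)"
      using main_dir[OF assms] h by blast
    thus ?thesis by (auto simp: insert_commute)
  next
    assume "1 \<in> B"
    moreover have "B \<union> A = Qpos \<alpha>" "B \<inter> A = {}" using h by auto
    ultimately have "(B = Hplus \<alpha> \<union> Hzero \<alpha> \<and> A = Hminus \<alpha>) \<or> (B = Hzero \<alpha> \<union> Hminus \<alpha> \<and> A = Hplus \<alpha>)"
      using main_dir[OF assms, of B A] h by blast
    thus ?thesis by (auto simp: insert_commute)
  qed
next
  fix A B :: "ratfun set"
  assume h: "{A, B} = {Hplus \<alpha> \<union> Hzero \<alpha>, Hminus \<alpha>} \<or> {A, B} = {Hplus \<alpha>, Hzero \<alpha> \<union> Hminus \<alpha>}"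
  note vs = valid_sets[OF assms]
  note vc = valid_closed[OF assms]
  note ne = valid_nonempty[OF assms]
  have P1: "X \<union> Y = Qpos \<alpha> \<and> X \<inter> Y = {} \<and> X \<noteq> {} \<and> Y \<noteq> {} \<and> add_mult_closed X \<and> add_mult_closed Y"
    if "(X = Hplus \<alpha> \<union> Hzero \<alpha> \<and> Y = Hminus \<alpha>) \<or> (X = Hplus \<alpha> \<and> Y = Hzero \<alpha> \<union> Hminus \<alpha>)" for X Y
  proof -
    from that show ?thesis
    proof
      assume xy: "X = Hplus \<alpha> \<union> Hzero \<alpha> \<and> Y = Hminus \<alpha>"
      have X: "X = {r. ratfun_eval r \<alpha> > 0 \<and> ratfun_deriv r \<alpha> \<ge> 0}" using xy vs(1) by simp
      have Y: "Y = {r. ratfun_eval r \<alpha> > 0 \<and> ratfun_deriv r \<alpha> < 0}" using xy vs(4) by simp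
      have "X \<union> Y = Qpos \<alpha>" "X \<inter> Y = {}" unfolding X Y vs(5) by auto
      moreover have "X \<noteq> {}" "Y \<noteq> {}" using xy ne by auto
      moreover have "add_mult_closed X" "add_mult_closed Y" unfolding X Y using vc by auto
      ultimately show ?thesis by blast
    next
      assume xy: "X = Hplus \<alpha> \<and> Y = Hzero \<alpha> \<union> Hminus \<alpha>"
      have X: "X = {r. ratfun_eval r \<alpha> > 0 \<and> ratfun_deriv r \<alpha> > 0}" using xy vs(3) by simp
      have Y: "Y = {r. ratfun_eval r \<alpha> > 0 \<and> ratfun_deriv r \<alpha> \<le> 0}" using xy vs(2) by simp
      have "X \<union> Y = Qpos \<alpha>" "X \<inter> Y = {}" unfolding X Y vs(5) by auto
      moreover have "X \<noteq> {}" "Y \<noteq> {}" using xy ne by auto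
      moreover have "add_mult_closed X" "add_mult_closed Y" unfolding X Y using vc by auto
      ultimately show ?thesis by blast
    qed
  qed
  from h have "(A = Hplus \<alpha> \<union> Hzero \<alpha> \<and> B = Hminus \<alpha>) \<or> (A = Hplus \<alpha> \<and> B = Hzero \<alpha> \<union> Hminus \<alpha>)
     \<or> (B = Hplus \<alpha> \<union> Hzero \<alpha> \<and> A = Hminus \<alpha>) \<or> (B = Hplus \<alpha> \<and> A = Hzero \<alpha> \<union> Hminus \<alpha>)"
    by (auto simp: doubleton_eq_iff)
  thus "A \<union> B = Qpos \<alpha> \<and> A \<inter> B = {} \<and> A \<noteq> {} \<and> B \<noteq> {} \<and> add_mult_closed A \<and> add_mult_closed B"
  proof (elim disjE)
    assume "B = Hplus \<alpha> \<union> Hzero \<alpha> \<and> A = Hminus \<alpha>"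
    hence "B \<union> A = Qpos \<alpha> \<and> B \<inter> A = {} \<and> B \<noteq> {} \<and> A \<noteq> {} \<and> add_mult_closed B \<and> add_mult_closed A"
      using P1 by blast
    thus ?thesis by (auto simp: Un_commute Int_commute)
  next
    assume "B = Hplus \<alpha> \<and> A = Hzero \<alpha> \<union> Hminus \<alpha>"
    hence "B \<union> A = Qpos \<alpha> \<and> B \<inter> A = {} \<and> B \<noteq> {} \<and> A \<noteq> {} \<and> add_mult_closed B \<and> add_mult_closed A"
      using P1 by blast
    thus ?thesis by (auto simp: Un_commute Int_commute)
  qed (use P1 in blast)+
qed


end
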